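(* Let the configuration space be $\mathbb{R}^n$ with each coordinate an independent double integrator $\ddot q_i=a_i$, $a_i\in[-1,1]$. Let $\tau$ be a piecewise-linear path in $\mathcal{C}_{free}$ from $q_I$ to $q_G$, with vertices $q_I=p_0,p_1,\dots,p_k=q_G$. Let $a(\cdot)$ be the bang-bang transform of $\tau$ and $x_I=(q_I,\mathbf{0})$, $x_G=(q_G,\mathbf{0})$. Then the bang-bang transform is time-optimal (for each edge, its control is a fastest control that keeps the configuration on that edge and steers from rest at one vertex to rest at the next); furthermore, the trajectory from $x_I$ under $a(\cdot)$ reaches $x_G$, and it is collision free, i.e., lies in $X_{free}=\{(q,\dot q): q\in\mathcal{C}_{free}\}$.
   Context: $\mathcal{C}_{free}$ is the open set of collision-free configurations. Bang-bang transform: for each edge from $q=p_{j-1}$ to $q'=p_j$, let $v=q'-q$, $\hat v=v/\|v\|$, $s=\max_i|\hat v_i|$, acceleration vector $a=\hat v/s$ and $t=\sqrt{s\|v\|}$; the edge control is $((a,t),(-a,t))$, i.e., apply $a$ for time $t$ and then $-a$ for time $t$. The controls of all edges are concatenated in order. *)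

theory Defs
  imports "HOL-Analysis.Analysis"
begin

text \<open>A control segment list: pairs (acceleration, duration), applied in order.\<close>
type_synonym 'n ctrl = "((real^'n) \<times> real) list"

fun ctrl_fun :: "'n ctrl \<Rightarrow> real \<Rightarrow> real^'n" where
  "ctrl_fun [] t = 0"
| "ctrl_fun ((a, d) # rest) t = (if t < d then a else ctrl_fun rest (t - d))"

definition ctrl_dur :: "'n ctrl \<Rightarrow> real" where
  "ctrl_dur c = sum_list (map snd c)"

definition admissible :: "(real \<Rightarrow> real^'n) \<Rightarrow> real \<Rightarrow> bool" where
  "admissible u T \<longleftrightarrow> (\<forall>t\<in>{0..T}. \<forall>i. \<bar>u t $ i\<bar> \<le> 1)"

text \<open>(q, w) is a (Caratheodory) trajectory of the double integrator under control u
on [0,T]: q' = w and w(t) = w(0) + integral of u over [0,t].\<close>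
definition is_traj ::
  "(real \<Rightarrow> real^'n) \<Rightarrow> real \<Rightarrow> (real \<Rightarrow> real^'n) \<Rightarrow> (real \<Rightarrow> real^'n) \<Rightarrow> bool" where
  "is_traj u T q w \<longleftrightarrow>
     (\<forall>t\<in>{0..T}. (q has_vector_derivative w t) (at t within {0..T})
                 \<and> (u has_integral (w t - w 0)) {0..t})"

definition steers ::
  "(real \<Rightarrow> real^'n) \<Rightarrow> real \<Rightarrow> real^'n \<Rightarrow> real^'n \<Rightarrow> (real^'n) set \<Rightarrow> bool" where
  "steers u T q0 q1 S \<longleftrightarrow>
     (\<exists>q w. is_traj u T q w \<and> q 0 = q0 \<and> w 0 = 0 \<and> q T = q1 \<and> w T = 0
            \<and> (\<forall>t\<in>{0..T}. q t \<in> S))"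

definition time_optimal_edge :: "'n ctrl \<Rightarrow> real^'n \<Rightarrow> real^'n \<Rightarrow> bool" where
  "time_optimal_edge c q q' \<longleftrightarrow>
     admissible (ctrl_fun c) (ctrl_dur c)
     \<and> steers (ctrl_fun c) (ctrl_dur c) q q' (closed_segment q q')
     \<and> (\<forall>u T. 0 \<le> T \<longrightarrow> admissible u T \<longrightarrow> steers u T q q' (closed_segment q q')
               \<longrightarrow> ctrl_dur c \<le> T)"

definition bb_edge :: "real^'n \<Rightarrow> real^'n \<Rightarrow> 'n ctrl" where
  "bb_edge q q' =
     (let v = q' - q;
          vh = v /\<^sub>R norm v;
          s = Max (range (\<lambda>i. \<bar>vh $ i\<bar>));
          a = vh /\<^sub>R s;
          t = sqrt (s * norm v)
      in [(a, t), (- a, t)])"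

definition bang_bang :: "(nat \<Rightarrow> real^'n) \<Rightarrow> nat \<Rightarrow> 'n ctrl" where
  "bang_bang p k = concat (map (\<lambda>j. bb_edge (p (j - 1)) (p j)) [1..<k+1])"

definition Xfree :: "(real^'n) set \<Rightarrow> ((real^'n) \<times> (real^'n)) set" where
  "Xfree Cfree = {(q, qd). q \<in> Cfree}"

end

theory Submission
  imports Defs
begin
lemma ctrl_fun_append:
  assumes "\<forall>x\<in>set c1. 0 \<le> snd x" "0 \<le> t"
  shows "ctrl_fun (c1 @ c2) t = (if t < ctrl_dur c1 then ctrl_fun c1 t else ctrl_fun c2 (t - ctrl_dur c1))"
  using assms
proof (induction c1 arbitrary: t)
  case Nil then show ?case by (simp add: ctrl_dur_def)
next
  case (Cons x r)
  obtain a d where x: "x = (a, d)" by force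
  have "ctrl_dur r \<ge> 0" using Cons.prems unfolding ctrl_dur_def
    by (auto intro!: sum_list_nonneg)
  then show ?case using Cons x by (auto simp: ctrl_dur_def algebra_simps)
qed

lemma has_integral_shift_real:
  fixes f :: "real \<Rightarrow> 'b::real_normed_vector"
  assumes "(f has_integral i) {a..b}"
  shows "((\<lambda>x. f (x + c)) has_integral i) {a-c..b-c}"
  using has_integral_affinity'[of f i a b 1 c] assms by simp

lemma integrable_ctrl: "ctrl_fun c integrable_on {x..y}"
proof (induction c arbitrary: x y)
  case Nil then show ?case by (simp add: integrable_0)
next
  case (Cons p r)
  obtain a d where p: "p = (a, d)" by force
  have A: "ctrl_fun (p # r) integrable_on {x..y}" if "y \<le> d" for x y
    by (rule integrable_spike_finite[of "{d}" _ _ "\<lambda>_. a"]) (use that p in auto)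
  have B: "ctrl_fun (p # r) integrable_on {x..y}" if "d \<le> x" for x y
  proof -
    have "(\<lambda>s. ctrl_fun r (s + (-d))) integrable_on {x - d - (-d)..y - d - (-d)}"
      using has_integral_shift_real Cons.IH[of "x - d" "y - d"] by blast
    then have "(\<lambda>s. ctrl_fun r (s + (-d))) integrable_on {x..y}" by simp
    then show ?thesis
      using integrable_spike_finite[of "{}" "{x..y}" "ctrl_fun (p # r)" "\<lambda>s. ctrl_fun r (s + (-d))"] that p
      by auto
  qed
  show ?case
  proof (cases "y \<le> d")
    case True then show ?thesis using A by blast
  next
    case False
    show ?thesis
    proof (cases "d \<le> x")
      case True then show ?thesis using B by blast
    next
      case False2: False
      show ?thesis
        by (rule Henstock_Kurzweil_Integration.integrable_combine[where a=x and c=d and b=y]) (use False False2 A B in auto)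
    qed
  qed
qed


lemma exists_traj:
  fixes c :: "('n::finite) ctrl"
  shows "\<exists>q w. is_traj (ctrl_fun c) T q w \<and> q 0 = q0 \<and> w 0 = 0"
proof -
  define W where "W t = integral {0..t} (ctrl_fun c)" for t
  define Q where "Q t = q0 + integral {0..t} W" for t
  have cW: "continuous_on {0..T} W"
    unfolding W_def by (rule indefinite_integral_continuous_1[OF integrable_ctrl])
  have W0: "W 0 = 0" unfolding W_def by simp
  have "is_traj (ctrl_fun c) T Q W"
    unfolding is_traj_def
  proof (intro ballI conjI)
    fix t assume t: "t \<in> {0..T}"
    show "(Q has_vector_derivative W t) (at t within {0..T})"
      unfolding Q_def
      using integral_has_vector_derivative[OF cW t]
      by (auto intro!: derivative_eq_intros)
    show "(ctrl_fun c has_integral W t - W 0) {0..t}"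
      using W0 integrable_integral[OF integrable_ctrl[of c 0 t]] unfolding W_def by simp
  qed
  moreover have "Q 0 = q0" unfolding Q_def by simp
  ultimately show ?thesis using W0 by blast
qed

lemma traj_const:
  fixes a :: "real^('n::finite)"
  assumes tr: "is_traj (ctrl_fun [(a, d)]) d q w" and s: "s \<in> {0..d}"
  shows "w s = w 0 + s *\<^sub>R a \<and> q s = q 0 + s *\<^sub>R w 0 + (s^2/2) *\<^sub>R a"
proof -
  have W: "w x = w 0 + x *\<^sub>R a" if x: "x \<in> {0..d}" for x
  proof -
    have "(ctrl_fun [(a, d)] has_integral (w x - w 0)) {0..x}"
      using tr x unfolding is_traj_def by blast
    moreover have "\<And>y. y \<in> {0..x} - {d} \<Longrightarrow> a = ctrl_fun [(a, d)] y"
      using x by auto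
    ultimately have "((\<lambda>_. a) has_integral (w x - w 0)) {0..x}"
      using has_integral_spike_finite[of "{d}" "{0..x}" "\<lambda>_. a" "ctrl_fun [(a, d)]"] by blast
    moreover have "((\<lambda>_. a) has_integral (x *\<^sub>R a)) {0..x}"
      using has_integral_const_real[of a 0 x] x by simp
    ultimately have "w x - w 0 = x *\<^sub>R a" by (rule has_integral_unique)
    then show ?thesis by (simp add: algebra_simps)
  qed
  define F where "F x = q x - (x *\<^sub>R w 0 + (x^2/2) *\<^sub>R a)" for x
  have "(F has_vector_derivative 0) (at x within {0..d})" if x: "x \<in> {0..d}" for x
  proof -
    have "(q has_vector_derivative w x) (at x within {0..d})"
      using tr x unfolding is_traj_def by blast
    moreover have "((\<lambda>x. x *\<^sub>R w 0) has_vector_derivative (x *\<^sub>R 0 + 1 *\<^sub>R w 0)) (at x within {0..d})"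
      by (intro has_vector_derivative_scaleR DERIV_ident has_vector_derivative_const)
    then have "((\<lambda>x. x *\<^sub>R w 0) has_vector_derivative w 0) (at x within {0..d})" by simp
    moreover have "((\<lambda>x. (x^2/2) *\<^sub>R a) has_vector_derivative x *\<^sub>R a) (at x within {0..d})"
    proof -
      have "((\<lambda>x. x^2/2) has_real_derivative x) (at x within {0..d})"
      proof -
        have "((\<lambda>x. x^2/2) has_real_derivative (real 2 * x^(2 - Suc 0)) / 2) (at x within {0..d})"
          by (intro DERIV_cdivide DERIV_pow)
        then show ?thesis by simp
      qed
      then have "((\<lambda>x. (x^2/2) *\<^sub>R a) has_vector_derivative ((x^2/2) *\<^sub>R 0 + x *\<^sub>R a)) (at x within {0..d})"
        by (intro has_vector_derivative_scaleR has_vector_derivative_const)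
      then show ?thesis by simp
    qed
    ultimately have "(F has_vector_derivative (w x - (w 0 + x *\<^sub>R a))) (at x within {0..d})"
      unfolding F_def
      by (intro has_vector_derivative_diff has_vector_derivative_add)
    then show ?thesis using W[OF x] by simp
  qed
  then obtain C where C: "\<And>x. x \<in> {0..d} \<Longrightarrow> F x = C"
    using has_vector_derivative_zero_constant[of "{0..d}" F] by auto
  have "0 \<in> {0..d}" using s by auto
  then have "F s = F 0" using C s by simp
  then show ?thesis using W[OF s] unfolding F_def by (simp add: algebra_simps)
qed

lemma ctrl_dur_nonneg: "\<forall>x\<in>set c. 0 \<le> snd x \<Longrightarrow> 0 \<le> ctrl_dur c"
  unfolding ctrl_dur_def by (auto intro!: sum_list_nonneg)

lemma traj_split:
  fixes c1 c2 :: "('n::finite) ctrl"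
  assumes nn: "\<forall>x\<in>set c1. 0 \<le> snd x" and D2: "0 \<le> ctrl_dur c2"
    and tr: "is_traj (ctrl_fun (c1 @ c2)) (ctrl_dur c1 + ctrl_dur c2) q w"
  shows "is_traj (ctrl_fun c1) (ctrl_dur c1) q w"
    and "is_traj (ctrl_fun c2) (ctrl_dur c2) (\<lambda>s. q (ctrl_dur c1 + s)) (\<lambda>s. w (ctrl_dur c1 + s))"
proof -
  define D1 where "D1 = ctrl_dur c1"
  define u where "u = ctrl_fun (c1 @ c2)"
  have D1: "0 \<le> D1" unfolding D1_def using ctrl_dur_nonneg[OF nn] .
  have tr': "\<And>t. t \<in> {0..D1 + ctrl_dur c2} \<Longrightarrow> (q has_vector_derivative w t) (at t within {0..D1 + ctrl_dur c2})
     \<and> (u has_integral (w t - w 0)) {0..t}"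
    using tr unfolding is_traj_def D1_def u_def by blast
  have uapp: "u y = (if y < D1 then ctrl_fun c1 y else ctrl_fun c2 (y - D1))" if "0 \<le> y" for y
    unfolding u_def D1_def using ctrl_fun_append[OF nn that] .
  show "is_traj (ctrl_fun c1) (ctrl_dur c1) q w"
    unfolding is_traj_def D1_def[symmetric]
  proof (intro ballI conjI)
    fix t assume t: "t \<in> {0..D1}"
    then have t': "t \<in> {0..D1 + ctrl_dur c2}" using D2 by auto
    show "(q has_vector_derivative w t) (at t within {0..D1})"
      using tr'[OF t', THEN conjunct1] by (rule has_vector_derivative_within_subset) (use D2 in auto)
    have "(u has_integral (w t - w 0)) {0..t}" using tr'[OF t'] by blast
    moreover have "\<And>y. y \<in> {0..t} - {D1} \<Longrightarrow> ctrl_fun c1 y = u y"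
      using t uapp by auto
    ultimately show "(ctrl_fun c1 has_integral (w t - w 0)) {0..t}"
      using has_integral_spike_finite[of "{D1}" "{0..t}" "ctrl_fun c1" u] by blast
  qed
  show "is_traj (ctrl_fun c2) (ctrl_dur c2) (\<lambda>s. q (ctrl_dur c1 + s)) (\<lambda>s. w (ctrl_dur c1 + s))"
    unfolding is_traj_def D1_def[symmetric]
  proof (intro ballI conjI)
    fix s assume s: "s \<in> {0..ctrl_dur c2}"
    have s': "D1 + s \<in> {0..D1 + ctrl_dur c2}" using s D1 by auto
    have f: "((\<lambda>s. D1 + s) has_vector_derivative 1) (at s within {0..ctrl_dur c2})"
      by (auto intro!: derivative_eq_intros)
    have g: "(q has_vector_derivative w (D1 + s)) (at (D1 + s) within (\<lambda>s. D1 + s) ` {0..ctrl_dur c2})"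
      using tr'[OF s', THEN conjunct1] by (rule has_vector_derivative_within_subset) (use D1 in auto)
    from vector_diff_chain_within[OF f g]
    show "((\<lambda>s. q (D1 + s)) has_vector_derivative w (D1 + s)) (at s within {0..ctrl_dur c2})"
      by (simp add: o_def)
    have I1: "(u has_integral (w (D1 + s) - w 0)) {0..D1 + s}" using tr'[OF s'] by blast
    have D1in: "D1 \<in> {0..D1 + ctrl_dur c2}" using D1 D2 by auto
    have I0: "(u has_integral (w D1 - w 0)) {0..D1}" using tr'[OF D1in] by blast
    have "u integrable_on {D1..D1 + s}"
    proof (rule integrable_subinterval_real[of u 0 "D1 + s"])
      show "u integrable_on {0..D1 + s}" using I1 by blast
      show "{D1..D1 + s} \<subseteq> {0..D1 + s}" using D1 by auto
    qed
    then obtain J where J: "(u has_integral J) {D1..D1 + s}" by blast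
    have "(u has_integral ((w D1 - w 0) + J)) {0..D1 + s}"
      using Henstock_Kurzweil_Integration.has_integral_combine[OF _ _ I0 J] D1 s by auto
    then have JJ: "J = w (D1 + s) - w D1"
      using has_integral_unique[OF I1] by (simp add: algebra_simps)
    have "((\<lambda>x. u (x + D1)) has_integral J) {D1 - D1..D1 + s - D1}"
      by (rule has_integral_shift_real[OF J])
    then have "((\<lambda>x. u (x + D1)) has_integral J) {0..s}" by simp
    moreover have "\<And>y. y \<in> {0..s} - {} \<Longrightarrow> ctrl_fun c2 y = u (y + D1)"
      using uapp D1 by auto
    ultimately show "(ctrl_fun c2 has_integral (w (D1 + s) - w (D1 + 0))) {0..s}"
      using has_integral_spike_finite[of "{}" "{0..s}" "ctrl_fun c2" "\<lambda>x. u (x + D1)"] JJ by auto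
  qed
qed

lemma in_segment_param:
  fixes q q' :: "'a::real_vector"
  assumes "0 \<le> \<mu>" "\<mu> \<le> 1"
  shows "q + \<mu> *\<^sub>R (q' - q) \<in> closed_segment q q'"
  unfolding closed_segment_def
  using assms by (auto intro!: exI[of _ \<mu>] simp: algebra_simps)

lemma bb_edge_props:
  fixes q q' :: "real^('n::finite)"
  assumes "q \<noteq> q'"
  obtains a t where "bb_edge q q' = [(a, t), (-a, t)]" "t > 0" "t^2 *\<^sub>R a = q' - q"
    "\<forall>i. \<bar>a $ i\<bar> \<le> 1" "\<exists>i. \<bar>a $ i\<bar> = 1"
proof -
  define v where "v = q' - q"
  define vh where "vh = v /\<^sub>R norm v"
  define s where "s = Max (range (\<lambda>i. \<bar>vh $ i\<bar>))"
  define a where "a = vh /\<^sub>R s"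
  define t where "t = sqrt (s * norm v)"
  have v0: "v \<noteq> 0" using assms unfolding v_def by simp
  then have nv: "norm v > 0" by simp
  have fin: "finite (range (\<lambda>i. \<bar>vh $ i\<bar>))" by simp
  have "s \<in> range (\<lambda>i. \<bar>vh $ i\<bar>)"
    unfolding s_def by (rule Max_in[OF fin]) simp
  then obtain i0 where i0: "s = \<bar>vh $ i0\<bar>" by blast
  have sge: "\<bar>vh $ i\<bar> \<le> s" for i
    unfolding s_def by (rule Max_ge[OF fin]) auto
  have "vh \<noteq> 0" unfolding vh_def using v0 by simp
  then obtain j where "vh $ j \<noteq> 0" by (metis vec_eq_iff zero_index)
  then have spos: "s > 0" using sge[of j] by linarith
  have e: "bb_edge q q' = [(a, t), (-a, t)]"
    unfolding bb_edge_def Let_def a_def t_def s_def vh_def v_def by simp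
  have tpos: "t > 0" unfolding t_def using spos nv by simp
  have t2: "t^2 = s * norm v" unfolding t_def using spos nv by simp
  have "t^2 *\<^sub>R a = q' - q"
    unfolding t2 a_def vh_def v_def using spos nv by (simp add: field_simps v_def[symmetric])
  moreover have "\<forall>i. \<bar>a $ i\<bar> \<le> 1"
    using sge spos unfolding a_def by (simp add: field_simps)
  moreover have "\<bar>a $ i0\<bar> = 1"
    using i0 spos unfolding a_def by (simp add: abs_mult)
  ultimately show ?thesis using that e tpos by blast
qed

lemma edge_traj:
  fixes a :: "real^('n::finite)"
  assumes t: "t > 0" and v: "t^2 *\<^sub>R a = q1 - q0"
    and tr: "is_traj (ctrl_fun [(a, t), (-a, t)]) (t + t) q w" and q0: "q 0 = q0" and w0: "w 0 = 0"
  shows "q (t + t) = q1 \<and> w (t + t) = 0 \<and> (\<forall>s\<in>{0..t + t}. q s \<in> closed_segment q0 q1)"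
proof -
  have dur: "ctrl_dur [(a, t)] = t" "ctrl_dur [(-a, t)] = t" by (simp_all add: ctrl_dur_def)
  have tr0: "is_traj (ctrl_fun ([(a, t)] @ [(-a, t)])) (ctrl_dur [(a, t)] + ctrl_dur [(-a, t)]) q w"
    using tr dur by simp
  have nn: "\<forall>x\<in>set [(a, t)]. 0 \<le> snd x" using t by simp
  have tr1: "is_traj (ctrl_fun [(a, t)]) t q w"
    using traj_split(1)[OF nn _ tr0] dur t by simp
  have tr2: "is_traj (ctrl_fun [(-a, t)]) t (\<lambda>s. q (t + s)) (\<lambda>s. w (t + s))"
    using traj_split(2)[OF nn _ tr0] dur t by simp
  have A: "w s = s *\<^sub>R a \<and> q s = q0 + (s^2/2) *\<^sub>R a" if "s \<in> {0..t}" for s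
    using traj_const[OF tr1 that] q0 w0 by simp
  have At: "w t = t *\<^sub>R a" "q t = q0 + (t^2/2) *\<^sub>R a" using A[of t] t by auto
  have B: "w (t + r) = (t - r) *\<^sub>R a \<and> q (t + r) = q0 + (t^2/2 + r * t - r^2/2) *\<^sub>R a"
    if r: "r \<in> {0..t}" for r
    using traj_const[OF tr2 r] At by (simp add: algebra_simps)
  have Bt: "w (t + t) = 0" "q (t + t) = q1"
    using B[of t] t v by (auto simp: power2_eq_square)
  have seg: "q s \<in> closed_segment q0 q1" if s: "s \<in> {0..t + t}" for s
  proof (cases "s \<le> t")
    case True
    have "q s = q0 + (s^2/2) *\<^sub>R a" using A[of s] s True by auto
    also have "\<dots> = q0 + (s^2 / (2 * t^2)) *\<^sub>R (q1 - q0)"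
      using t by (simp add: v[symmetric])
    finally have e: "q s = q0 + (s^2 / (2 * t^2)) *\<^sub>R (q1 - q0)" .
    have "s^2 \<le> t^2" using s True by (simp add: power_mono)
    moreover have "0 \<le> t^2" by simp
    ultimately have "s^2 \<le> 2 * t^2" by linarith
    then have "s^2 / (2 * t^2) \<le> 1" using t by (simp add: field_simps)
    then show ?thesis unfolding e by (intro in_segment_param) auto
  next
    case False
    define r where "r = s - t"
    have r: "r \<in> {0..t}" using s False unfolding r_def by auto
    have "q s = q (t + r)" unfolding r_def by simp
    also have "\<dots> = q0 + (t^2/2 + r * t - r^2/2) *\<^sub>R a" using B[OF r] by simp
    also have "\<dots> = q0 + ((t^2/2 + r * t - r^2/2) / t^2) *\<^sub>R (q1 - q0)"
      using t by (simp add: v[symmetric])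
    finally have e: "q s = q0 + ((t^2/2 + r * t - r^2/2) / t^2) *\<^sub>R (q1 - q0)" .
    have "0 \<le> t^2/2 + r * (t - r/2)" using r t by (auto intro!: add_nonneg_nonneg mult_nonneg_nonneg)
    then have m0: "0 \<le> (t^2/2 + r * t - r^2/2) / t^2"
      by (simp add: power2_eq_square algebra_simps)
    have "0 \<le> (t - r)^2" by simp
    then have "t^2/2 + r * t - r^2/2 \<le> t^2" by (simp add: power2_eq_square algebra_simps)
    then have m1: "(t^2/2 + r * t - r^2/2) / t^2 \<le> 1" using t by (simp add: field_simps)
    show ?thesis unfolding e using m0 m1 by (intro in_segment_param)
  qed
  show ?thesis using Bt seg by blast
qed

lemma nonincr_within:
  fixes f D :: "real \<Rightarrow> real"
  assumes ab: "a \<le> b"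
    and d: "\<And>x. x \<in> {a..b} \<Longrightarrow> (f has_real_derivative D x) (at x within {a..b})"
    and n: "\<And>x. x \<in> {a..b} \<Longrightarrow> D x \<le> 0"
  shows "f b \<le> f a"
proof -
  have "\<exists>x\<in>{a..b}. f b - f a = (\<lambda>h. D x * h) (b - a)"
    by (rule mvt_very_simple[OF ab]) (use d in \<open>auto simp: has_field_derivative_def\<close>)
  then obtain x where x: "x \<in> {a..b}" "f b - f a = D x * (b - a)" by auto
  have "D x * (b - a) \<le> 0" using n[OF x(1)] ab by (simp add: mult_nonpos_nonneg)
  then show ?thesis using x by simp
qed

lemma integral_tail:
  fixes f :: "real \<Rightarrow> 'a::banach"
  assumes I: "(f has_integral I) {0..t}" and J: "(f has_integral J) {0..T}" and t: "0 \<le> t" "t \<le> T"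
  shows "(f has_integral (J - I)) {t..T}"
proof -
  have "f integrable_on {t..T}"
  proof (rule integrable_subinterval_real[of f 0 T])
    show "f integrable_on {0..T}" using J by blast
    show "{t..T} \<subseteq> {0..T}" using t by auto
  qed
  then obtain K where K: "(f has_integral K) {t..T}" by blast
  have "(f has_integral (I + K)) {0..T}"
    using Henstock_Kurzweil_Integration.has_integral_combine[OF t I K] .
  then have "K = J - I" using has_integral_unique[OF J] by (simp add: algebra_simps)
  then show ?thesis using K by simp
qed

lemma lower_bound:
  fixes u :: "real \<Rightarrow> real^('n::finite)" and q0 q1 :: "real^'n"
  assumes adm: "admissible u T" and T: "0 \<le> T" and st: "steers u T q0 q1 S"
  shows "\<bar>(q1 - q0) $ i\<bar> \<le> T^2/4"
proof -
  obtain qq w where tr: "is_traj u T qq w" and e: "qq 0 = q0" "w 0 = 0" "qq T = q1" "w T = 0"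
    using st unfolding steers_def by blast
  define \<sigma> where "\<sigma> = (if (q1 - q0) $ i \<ge> 0 then 1 else -1::real)"
  have sabs: "\<bar>\<sigma> * x\<bar> = \<bar>x\<bar>" for x unfolding \<sigma>_def by auto
  have sv: "\<sigma> * (q1 - q0) $ i = \<bar>(q1 - q0) $ i\<bar>" unfolding \<sigma>_def by auto
  have trt: "(qq has_vector_derivative w t) (at t within {0..T}) \<and> (u has_integral (w t - w 0)) {0..t}"
    if "t \<in> {0..T}" for t
    using tr that unfolding is_traj_def by blast
  have Ii: "((\<lambda>x. u x $ i) has_integral (w t $ i)) {0..t}" if t: "t \<in> {0..T}" for t
    using has_integral_linear[OF trt[OF t, THEN conjunct2] bounded_linear_vec_nth[of i]] e
    by (simp add: o_def)
  have ub: "norm (u x $ i) \<le> 1" if "x \<in> {0..T}" for x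
    using adm that unfolding admissible_def by auto
  have h1: "\<sigma> * w t $ i \<le> t" if t: "t \<in> {0..T}" for t
  proof -
    have b: "\<And>x. x \<in> {0..t} - {} \<Longrightarrow> norm (u x $ i) \<le> 1" using ub t by auto
    have "norm (w t $ i) \<le> t"
      using has_integral_bound_real[OF zero_le_one finite.emptyI Ii[OF t] b] t by simp
    then show ?thesis using t sabs[of "w t $ i"] by auto
  qed
  have h2: "\<sigma> * w t $ i \<le> T - t" if t: "t \<in> {0..T}" for t
  proof -
    have TT: "T \<in> {0..T}" using T by auto
    have I2: "((\<lambda>x. u x $ i) has_integral (w T $ i - w t $ i)) {t..T}"
      using integral_tail[OF Ii[OF t] Ii[OF TT]] t by auto
    have b: "\<And>x. x \<in> {t..T} - {} \<Longrightarrow> norm (u x $ i) \<le> 1" using ub t by auto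
    have "norm (w T $ i - w t $ i) \<le> T - t"
      using has_integral_bound_real[OF zero_le_one finite.emptyI I2 b] t by simp
    then show ?thesis using t sabs[of "w t $ i"] e by auto
  qed
  have dq: "((\<lambda>t. \<sigma> * qq t $ i) has_real_derivative \<sigma> * w t $ i) (at t within {0..T})"
    if t: "t \<in> {0..T}" for t
  proof -
    have "((\<lambda>t. qq t $ i) has_vector_derivative w t $ i) (at t within {0..T})"
      using bounded_linear.has_vector_derivative[OF bounded_linear_vec_nth trt[OF t, THEN conjunct1]] .
    then have "((\<lambda>t. qq t $ i) has_real_derivative w t $ i) (at t within {0..T})"
      by (simp add: has_real_derivative_iff_has_vector_derivative)
    then show ?thesis by (rule DERIV_cmult)
  qed
  have dsq: "((\<lambda>t. t^2/2) has_real_derivative t) (at t within X)" for t :: real and X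
  proof -
    have "((\<lambda>x. x^2/2) has_real_derivative (real 2 * t^(2 - Suc 0)) / 2) (at t within X)"
      by (intro DERIV_cdivide DERIV_pow)
    then show ?thesis by simp
  qed
  have dlin: "((\<lambda>t. T * t) has_real_derivative T) (at t within X)" for t :: real and X
  proof -
    have "((\<lambda>t. T * t) has_real_derivative T * 1) (at t within X)"
      by (intro DERIV_cmult DERIV_ident)
    then show ?thesis by simp
  qed
  define F1 where "F1 t = \<sigma> * qq t $ i - t^2/2" for t
  define F2 where "F2 t = \<sigma> * qq t $ i + T^2/2 - T * t + t^2/2" for t
  have "F1 (T/2) \<le> F1 0"
  proof (rule nonincr_within[where f=F1 and a=0 and b="T/2" and D = "\<lambda>t. \<sigma> * w t $ i - t"])
    fix x assume x: "x \<in> {0..T/2}"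
    then have x': "x \<in> {0..T}" by auto
    show "(F1 has_real_derivative \<sigma> * w x $ i - x) (at x within {0..T/2})"
      unfolding F1_def
      by (rule DERIV_subset[OF DERIV_diff[OF dq[OF x'] dsq]]) auto
    show "\<sigma> * w x $ i - x \<le> 0" using h1[OF x'] by simp
  qed (use T in auto)
  moreover have "F2 T \<le> F2 (T/2)"
  proof (rule nonincr_within[where f=F2 and a="T/2" and b=T and D = "\<lambda>t. \<sigma> * w t $ i + 0 - T + t"])
    fix x assume x: "x \<in> {T/2..T}"
    then have x': "x \<in> {0..T}" using T by auto
    show "(F2 has_real_derivative \<sigma> * w x $ i + 0 - T + x) (at x within {T/2..T})"
      unfolding F2_def
      by (rule DERIV_subset[OF DERIV_add[OF DERIV_diff[OF DERIV_add[OF dq[OF x'] DERIV_const] dlin] dsq]])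
        (use T in auto)
    show "\<sigma> * w x $ i + 0 - T + x \<le> 0" using h2[OF x'] by simp
  qed (use T in auto)
  ultimately have "\<sigma> * qq T $ i - \<sigma> * qq 0 $ i \<le> T^2/4"
    unfolding F1_def F2_def by (simp add: power2_eq_square field_simps)
  then show ?thesis using sv e by (simp add: algebra_simps)
qed

lemma bang_bang_Suc: "bang_bang p (Suc k) = bang_bang p k @ bb_edge (p k) (p (Suc k))"
  unfolding bang_bang_def by simp

lemma ctrl_dur_append: "ctrl_dur (c1 @ c2) = ctrl_dur c1 + ctrl_dur c2"
  unfolding ctrl_dur_def by simp

lemma bb_nonneg:
  fixes p :: "nat \<Rightarrow> real^('n::finite)"
  assumes "\<forall>j\<in>{1..k}. p (j - 1) \<noteq> p j"
  shows "\<forall>x\<in>set (bang_bang p k). 0 \<le> snd x"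
  using assms
proof (induction k)
  case 0 then show ?case by (simp add: bang_bang_def)
next
  case (Suc k)
  have "Suc k \<in> {1..Suc k}" by simp
  then have ne: "p k \<noteq> p (Suc k)" using Suc.prems by fastforce
  obtain a t where "bb_edge (p k) (p (Suc k)) = [(a, t), (-a, t)]" "t > 0"
    using bb_edge_props[OF ne] by blast
  moreover have "\<forall>x\<in>set (bang_bang p k). 0 \<le> snd x" using Suc by auto
  ultimately show ?case unfolding bang_bang_Suc by auto
qed

lemma path_traj:
  fixes p :: "nat \<Rightarrow> real^('n::finite)"
  assumes ne: "\<forall>j\<in>{1..k}. p (j - 1) \<noteq> p j"
    and seg: "\<forall>j\<in>{1..k}. closed_segment (p (j - 1)) (p j) \<subseteq> C" and p0: "p 0 \<in> C"
    and tr: "is_traj (ctrl_fun (bang_bang p k)) (ctrl_dur (bang_bang p k)) q w"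
    and q0: "q 0 = p 0" and w0: "w 0 = 0"
  shows "q (ctrl_dur (bang_bang p k)) = p k \<and> w (ctrl_dur (bang_bang p k)) = 0
    \<and> (\<forall>t\<in>{0..ctrl_dur (bang_bang p k)}. q t \<in> C)"
  using ne seg tr
proof (induction k)
  case 0
  have "bang_bang p 0 = []" by (simp add: bang_bang_def)
  then show ?case using q0 w0 p0 by (simp add: ctrl_dur_def)
next
  case (Suc k)
  have kk: "Suc k \<in> {1..Suc k}" by simp
  have ne': "p k \<noteq> p (Suc k)" using Suc.prems(1) kk by fastforce
  have segk: "closed_segment (p k) (p (Suc k)) \<subseteq> C" using Suc.prems(2) kk by fastforce
  obtain a t where e: "bb_edge (p k) (p (Suc k)) = [(a, t), (-a, t)]" and t: "t > 0"
    and v: "t^2 *\<^sub>R a = p (Suc k) - p k"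
    using bb_edge_props[OF ne'] by blast
  define c1 where "c1 = bang_bang p k"
  define D1 where "D1 = ctrl_dur c1"
  have ne1: "\<forall>j\<in>{1..k}. p (j - 1) \<noteq> p j" using Suc.prems(1) by simp
  have seg1: "\<forall>j\<in>{1..k}. closed_segment (p (j - 1)) (p j) \<subseteq> C" using Suc.prems(2) by simp
  have nn: "\<forall>x\<in>set c1. 0 \<le> snd x" unfolding c1_def by (rule bb_nonneg[OF ne1])
  have d2: "ctrl_dur [(a, t), (-a, t)] = t + t" by (simp add: ctrl_dur_def)
  have tr0: "is_traj (ctrl_fun (c1 @ [(a, t), (-a, t)])) (ctrl_dur c1 + ctrl_dur [(a, t), (-a, t)]) q w"
    using Suc.prems(3) unfolding bang_bang_Suc e c1_def ctrl_dur_append .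
  have D2: "0 \<le> ctrl_dur [(a, t), (-a, t)]" using d2 t by simp
  have IH: "q D1 = p k \<and> w D1 = 0 \<and> (\<forall>t\<in>{0..D1}. q t \<in> C)"
  proof -
    have tr1: "is_traj (ctrl_fun (bang_bang p k)) (ctrl_dur (bang_bang p k)) q w"
      using traj_split(1)[OF nn D2 tr0] unfolding c1_def .
    show ?thesis using Suc.IH[OF ne1 seg1 tr1] unfolding D1_def c1_def .
  qed
  have tr2: "is_traj (ctrl_fun [(a, t), (-a, t)]) (t + t) (\<lambda>s. q (D1 + s)) (\<lambda>s. w (D1 + s))"
    using traj_split(2)[OF nn D2 tr0] d2 unfolding D1_def by simp
  have E: "q (D1 + (t + t)) = p (Suc k) \<and> w (D1 + (t + t)) = 0
      \<and> (\<forall>s\<in>{0..t + t}. q (D1 + s) \<in> closed_segment (p k) (p (Suc k)))"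
    using edge_traj[OF t v tr2] IH by simp
  have dur: "ctrl_dur (bang_bang p (Suc k)) = D1 + (t + t)"
    unfolding bang_bang_Suc e ctrl_dur_append D1_def c1_def d2 ..
  have "q s \<in> C" if s: "s \<in> {0..D1 + (t + t)}" for s
  proof (cases "s \<le> D1")
    case True then show ?thesis using IH s by auto
  next
    case False
    then have "s - D1 \<in> {0..t + t}" using s by auto
    then have "q (D1 + (s - D1)) \<in> closed_segment (p k) (p (Suc k))" using E by blast
    then show ?thesis using segk by auto
  qed
  then show ?case unfolding dur using E by blast
qed


lemma adm_bb:
  fixes a :: "real^('n::finite)"
  assumes a1: "\<forall>i. \<bar>a $ i\<bar> \<le> 1"
  shows "admissible (ctrl_fun [(a, t), (-a, t)]) T"
  unfolding admissible_def
proof (intro ballI allI)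
  fix x i
  have ai: "\<bar>a $ i\<bar> \<le> 1" using a1 by blast
  show "\<bar>ctrl_fun [(a, t), (-a, t)] x $ i\<bar> \<le> 1"
  proof (cases "x < t")
    case True
    then have "ctrl_fun [(a, t), (-a, t)] x = a" by simp
    then show ?thesis using ai by simp
  next
    case False
    show ?thesis
    proof (cases "x - t < t")
      case True
      then have "ctrl_fun [(a, t), (-a, t)] x = -a" using False by simp
      then show ?thesis using ai by simp
    next
      case False2: False
      then have "ctrl_fun [(a, t), (-a, t)] x = 0" using False by simp
      then show ?thesis by simp
    qed
  qed
qed

lemma half_bound:
  fixes t T :: real
  assumes T: "0 \<le> T" and h: "t^2 \<le> T^2/4"
  shows "t + t \<le> T"
proof (rule ccontr)
  assume "\<not> t + t \<le> T"
  then have "T/2 < t" by simp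
  then have "(T/2)^2 < t^2" using T by (intro power_strict_mono) auto
  moreover have "(T/2)^2 = T^2/4" by (simp add: power2_eq_square)
  ultimately show False using h by simp
qed
lemma edge_optimal:
  fixes q q' :: "real^('n::finite)"
  assumes ne: "q \<noteq> q'"
  shows "time_optimal_edge (bb_edge q q') q q'"
proof -
  obtain a t where e: "bb_edge q q' = [(a, t), (-a, t)]" and t: "t > 0"
    and v: "t^2 *\<^sub>R a = q' - q" and a1: "\<forall>i. \<bar>a $ i\<bar> \<le> 1" and a2: "\<exists>i. \<bar>a $ i\<bar> = 1"
    by (rule bb_edge_props[OF ne])
  have d: "ctrl_dur [(a, t), (-a, t)] = t + t" by (simp add: ctrl_dur_def)
  have adm: "admissible (ctrl_fun [(a, t), (-a, t)]) (t + t)" by (rule adm_bb[OF a1])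
  obtain qq w where tr: "is_traj (ctrl_fun [(a, t), (-a, t)]) (t + t) qq w" and i: "qq 0 = q" "w 0 = 0"
    using exists_traj[of "[(a, t), (-a, t)]" "t + t" q] by blast
  have st: "steers (ctrl_fun [(a, t), (-a, t)]) (t + t) q q' (closed_segment q q')"
  proof -
    have "qq (t + t) = q' \<and> w (t + t) = 0 \<and> (\<forall>s\<in>{0..t + t}. qq s \<in> closed_segment q q')"
      using edge_traj[OF t v tr i] .
    then show ?thesis unfolding steers_def using i tr by blast
  qed
  obtain i where ai: "\<bar>a $ i\<bar> = 1" using a2 by blast
  have vi: "\<bar>(q' - q) $ i\<bar> = t^2" using ai t by (simp add: v[symmetric] abs_mult)
  have opt: "t + t \<le> T" if T: "0 \<le> T" and ad: "admissible u T" and s: "steers u T q q' (closed_segment q q')" for u T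
  proof -
    have "\<bar>(q' - q) $ i\<bar> \<le> T^2/4" by (rule lower_bound[OF ad T s])
    then have "t^2 \<le> T^2/4" using vi by simp
    then show ?thesis by (rule half_bound[OF T])
  qed
  show ?thesis unfolding time_optimal_edge_def e d using adm st opt by blast
qed

theorem proposition5:
  fixes Cfree :: "(real^'n) set" and p :: "nat \<Rightarrow> real^'n" and k :: nat
    and qI qG :: "real^'n"
  assumes "open Cfree"
    and "p 0 = qI" and "p k = qG"
    and "\<forall>j\<le>k. p j \<in> Cfree"
    and "\<forall>j\<in>{1..k}. closed_segment (p (j - 1)) (p j) \<subseteq> Cfree"
    and "\<forall>j\<in>{1..k}. p (j - 1) \<noteq> p j"
  shows "(\<forall>j\<in>{1..k}. time_optimal_edge (bb_edge (p (j - 1)) (p j)) (p (j - 1)) (p j))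
    \<and> (let u = ctrl_fun (bang_bang p k); T = ctrl_dur (bang_bang p k) in
         (\<exists>q w. is_traj u T q w \<and> q 0 = qI \<and> w 0 = 0)
       \<and> (\<forall>q w. is_traj u T q w \<and> q 0 = qI \<and> w 0 = 0 \<longrightarrow>
            q T = qG \<and> w T = 0 \<and> (\<forall>t\<in>{0..T}. (q t, w t) \<in> Xfree Cfree)))"
proof -
  have A: "\<forall>j\<in>{1..k}. time_optimal_edge (bb_edge (p (j - 1)) (p j)) (p (j - 1)) (p j)"
    using assms(6) edge_optimal by blast
  have B: "\<exists>q w. is_traj (ctrl_fun (bang_bang p k)) (ctrl_dur (bang_bang p k)) q w \<and> q 0 = qI \<and> w 0 = 0"
    by (rule exists_traj)
  have p0: "p 0 \<in> Cfree" using assms(4) by auto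
  have C: "q (ctrl_dur (bang_bang p k)) = qG \<and> w (ctrl_dur (bang_bang p k)) = 0
      \<and> (\<forall>t\<in>{0..ctrl_dur (bang_bang p k)}. (q t, w t) \<in> Xfree Cfree)"
    if "is_traj (ctrl_fun (bang_bang p k)) (ctrl_dur (bang_bang p k)) q w \<and> q 0 = qI \<and> w 0 = 0" for q w
  proof -
    have "q (ctrl_dur (bang_bang p k)) = p k \<and> w (ctrl_dur (bang_bang p k)) = 0
       \<and> (\<forall>t\<in>{0..ctrl_dur (bang_bang p k)}. q t \<in> Cfree)"
      using path_traj[OF assms(6) assms(5) p0, of q w] that assms(2) by simp
    then show ?thesis unfolding Xfree_def using assms(3) by simp
  qed
  show ?thesis unfolding Let_def using A B C by blast
qed

end
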